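(* Let $G$ be a locally compact Abelian group with a fixed Haar measure $\lambda_G$, and let $\Omega\subset G$ be a measurable subset with $\lambda_G(\Omega)<\infty$. Then there is an open $\sigma$-compact subgroup $H$ of $G$ with $\Omega\subset H$ such that $$\mathcal{D}_G(\Omega)=\mathcal{D}_H(\Omega),$$ where $H$ is equipped with the Haar measure $\lambda_H:=\lambda_G|_H$.
   Context: All locally compact Abelian (LCA) groups are assumed Hausdorff, with identity $0$. A function $f:G\to\mathbb{C}$ is positive definite if $\sum_{i,j=1}^n c_i\overline{c_j} f(g_i-g_j)\ge 0$ for all $n\in\mathbb{N}$, $c_i\in\mathbb{C}$, $g_i\in G$. $P_1(G)$ denotes the set of continuous positive definite functions $f:G\to\mathbb{R}$ with $f(0)=1$. For $f:G\to\mathbb{R}$, $f_+(g):=\max\{f(g),0\}$ and $\operatorname{supp} f:=\overline{\{g\in G: f(g)\neq 0\}}$. For a LCA group $G$ with Haar measure $\lambda_G$ and $\Omega\subset G$, define $$\mathcal{G}_G(\Omega):=\{f\in P_1(G)\cap L^1(G): \operatorname{supp} f_+\subset\Omega\},\qquad \mathcal{D}_G(\Omega):=\sup_{f\in\mathcal{G}_G(\Omega)}\int_G f\,d\lambda_G,$$ with the convention that $\mathcal{D}_G(\Omega)=0$ when $\mathcal{G}_G(\Omega)$ is empty. The same definitions apply with $H$ in place of $G$. *)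

theory Defs
  imports "HOL-Analysis.Analysis"
begin

definition lca_group :: "'a::{topological_ab_group_add,t2_space} itself \<Rightarrow> bool" where
  "lca_group _ \<longleftrightarrow> locally_compact_space (euclidean :: 'a topology)"

definition haar_measure :: "'a::{topological_ab_group_add,t2_space} measure \<Rightarrow> bool" where
  "haar_measure M \<longleftrightarrow>
     sets M = sets borel \<and>
     (\<forall>A\<in>sets M. \<forall>x. emeasure M ((\<lambda>y. x + y) ` A) = emeasure M A) \<and>
     (\<forall>K. compact K \<longrightarrow> emeasure M K < \<infinity>) \<and>
     (\<forall>A\<in>sets M. emeasure M A = (INF U\<in>{U. open U \<and> A \<subseteq> U}. emeasure M U)) \<and>
     (\<forall>U. open U \<longrightarrow> emeasure M U = (SUP K\<in>{K. compact K \<and> K \<subseteq> U}. emeasure M K)) \<and>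
     emeasure M UNIV \<noteq> 0"

definition subgroup_set :: "'a::ab_group_add set \<Rightarrow> bool" where
  "subgroup_set H \<longleftrightarrow> 0 \<in> H \<and> (\<forall>x\<in>H. \<forall>y\<in>H. x + y \<in> H) \<and> (\<forall>x\<in>H. - x \<in> H)"

definition sigma_compact :: "'a::topological_space set \<Rightarrow> bool" where
  "sigma_compact H \<longleftrightarrow> (\<exists>K::nat \<Rightarrow> 'a set. (\<forall>n. compact (K n)) \<and> H = (\<Union>n. K n))"

definition pos_def_on :: "'a::ab_group_add set \<Rightarrow> ('a \<Rightarrow> real) \<Rightarrow> bool" where
  "pos_def_on H f \<longleftrightarrow>
     (\<forall>(n::nat) (c::nat \<Rightarrow> complex) (g::nat \<Rightarrow> 'a). (\<forall>i<n. g i \<in> H) \<longrightarrow>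
        (let s = (\<Sum>i<n. \<Sum>j<n. c i * cnj (c j) * complex_of_real (f (g i - g j)))
         in Im s = 0 \<and> Re s \<ge> 0))"

definition supp_on :: "'a::topological_space set \<Rightarrow> ('a \<Rightarrow> real) \<Rightarrow> 'a set" where
  "supp_on H f = H \<inter> closure {g\<in>H. f g \<noteq> 0}"

definition pos_part :: "('a \<Rightarrow> real) \<Rightarrow> 'a \<Rightarrow> real" where
  "pos_part f = (\<lambda>g. max (f g) 0)"

text \<open>\<open>GG M H \<Omega>\<close> is \<open>\<G>_H(\<Omega>)\<close> for the group H with Haar measure M restricted to H:
  continuous positive definite real functions on H with f 0 = 1, integrable on H,
  whose positive part has support inside \<Omega>.\<close>

definition GG :: "'a::{topological_ab_group_add,t2_space} measure \<Rightarrow> 'a set \<Rightarrow> 'a set \<Rightarrow> ('a \<Rightarrow> real) set" where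
  "GG M H \<Omega> = {f. continuous_on H f \<and> pos_def_on H f \<and> f 0 = 1 \<and>
                   integrable (restrict_space M H) f \<and> supp_on H (pos_part f) \<subseteq> \<Omega>}"

definition DD :: "'a::{topological_ab_group_add,t2_space} measure \<Rightarrow> 'a set \<Rightarrow> 'a set \<Rightarrow> real" where
  "DD M H \<Omega> = (if GG M H \<Omega> = {} then 0
               else (SUP f\<in>GG M H \<Omega>. integral\<^sup>L (restrict_space M H) f))"

end

theory Submission
  imports Defs
begin


lemma open_transl:
  fixes S :: "'a::topological_ab_group_add set"
  assumes "open S" shows "open ((\<lambda>y. a + y) ` S)"
proof -
  have "(\<lambda>y. a + y) ` S = (\<lambda>y. y - a) -` S"
    by (auto simp: image_iff) (metis add.commute diff_add_cancel)
  moreover have "continuous_on UNIV (\<lambda>y::'a. y - a)"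
    by (intro continuous_intros)
  ultimately show ?thesis using assms
    by (metis open_vimage)
qed

lemma open_uminus_img:
  fixes S :: "'a::topological_ab_group_add set"
  assumes "open S" shows "open (uminus ` S)"
proof -
  have "uminus ` S = uminus -` S"
    by (auto simp: image_iff) (metis minus_minus)
  moreover have "continuous_on UNIV (uminus::'a\<Rightarrow>'a)"
    by (intro continuous_intros)
  ultimately show ?thesis using assms
    by (metis open_vimage)
qed

lemma subgroup_diff: "subgroup_set H \<Longrightarrow> x \<in> H \<Longrightarrow> y \<in> H \<Longrightarrow> x - y \<in> H"
  unfolding subgroup_set_def by (metis diff_conv_add_uminus)

lemma subgroup_open:
  fixes H :: "'a::topological_ab_group_add set"
  assumes "subgroup_set H" "open V" "0 \<in> V" "V \<subseteq> H"
  shows "open H"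
proof -
  have "H = (\<Union>x\<in>H. (\<lambda>y. x + y) ` V)"
  proof
    show "H \<subseteq> (\<Union>x\<in>H. (\<lambda>y. x + y) ` V)" using assms(3) by force
    show "(\<Union>x\<in>H. (\<lambda>y. x + y) ` V) \<subseteq> H" using assms(1,4) unfolding subgroup_set_def by auto
  qed
  then show ?thesis using open_transl[OF assms(2)] by (metis open_UN)
qed

lemma subgroup_open_closed:
  fixes H :: "'a::topological_ab_group_add set"
  assumes "subgroup_set H" "open H"
  shows "closed H"
proof -
  have "- H = (\<Union>x\<in>-H. (\<lambda>y. x + y) ` H)"
  proof
    show "- H \<subseteq> (\<Union>x\<in>-H. (\<lambda>y. x + y) ` H)" using assms(1) unfolding subgroup_set_def by force
    show "(\<Union>x\<in>-H. (\<lambda>y. x + y) ` H) \<subseteq> - H"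
    proof clarsimp
      fix x y assume "x \<notin> H" "y \<in> H" "x + y \<in> H"
      then have "(x + y) - y \<in> H" using subgroup_diff[OF assms(1)] by blast
      then show False using \<open>x \<notin> H\<close> by simp
    qed
  qed
  then have "open (- H)" using open_transl[OF assms(2)] by (metis open_UN)
  then show ?thesis by (simp add: closed_open)
qed



definition sc2 :: "'a::topological_space set \<Rightarrow> bool" where
  "sc2 S \<longleftrightarrow> (\<exists>\<K>. countable \<K> \<and> (\<forall>K\<in>\<K>. compact K) \<and> S = \<Union>\<K>)"

lemma sc2_sigma_compact: "sc2 S \<Longrightarrow> sigma_compact S"
proof -
  assume "sc2 S"
  then obtain \<K> where K: "countable \<K>" "\<forall>K\<in>\<K>. compact K" "S = \<Union>\<K>" unfolding sc2_def by blast
  show ?thesis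
  proof (cases "\<K> = {}")
    case True
    then show ?thesis unfolding sigma_compact_def using K by (intro exI[of _ "\<lambda>n. {}"]) auto
  next
    case False
    then show ?thesis unfolding sigma_compact_def using K
      by (intro exI[of _ "from_nat_into \<K>"]) (auto simp: range_from_nat_into from_nat_into)
  qed
qed

lemma sc2_compact: "compact K \<Longrightarrow> sc2 K"
  unfolding sc2_def by (intro exI[of _ "{K}"]) auto

lemma sc2_Union:
  assumes "countable I" "\<And>i. i \<in> I \<Longrightarrow> sc2 (A i)"
  shows "sc2 (\<Union>i\<in>I. A i)"
proof -
  obtain F where F: "\<And>i. i \<in> I \<Longrightarrow> countable (F i) \<and> (\<forall>K\<in>F i. compact K) \<and> A i = \<Union>(F i)"
    using assms(2) unfolding sc2_def by metis
  show ?thesis unfolding sc2_def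
    by (intro exI[of _ "\<Union>i\<in>I. F i"]) (use F assms(1) in auto)
qed

lemma sc2_Un: "sc2 A \<Longrightarrow> sc2 B \<Longrightarrow> sc2 (A \<union> B)"
proof -
  assume "sc2 A" "sc2 B"
  then obtain \<A> \<B> where A: "countable \<A>" "\<forall>K\<in>\<A>. compact K" "A = \<Union>\<A>"
    and B: "countable \<B>" "\<forall>K\<in>\<B>. compact K" "B = \<Union>\<B>" unfolding sc2_def by blast
  show ?thesis unfolding sc2_def
    by (rule exI[of _ "\<A> \<union> \<B>"]) (use A B in auto)
qed

lemma compact_sum_set:
  fixes K L :: "'a::topological_ab_group_add set"
  assumes "compact K" "compact L"
  shows "compact ((\<lambda>(x,y). x + y) ` (K \<times> L))"
proof -
  have *: "continuous_on (K \<times> L) (\<lambda>p. fst p + snd p)" by (intro continuous_intros)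
    have e: "(\<lambda>(x,y). x + y) = (\<lambda>p::'a\<times>'a. fst p + snd p)" by auto
  show ?thesis unfolding e by (rule compact_continuous_image[OF * compact_Times[OF assms]])
qed

lemma sum_set_UN:
  "(\<lambda>(x,y). x + y) ` ((\<Union>A) \<times> (\<Union>B)) = (\<Union>p\<in>A \<times> B. (\<lambda>(x,y). x + y) ` (fst p \<times> snd p))"
  by force

lemma sc2_sum:
  fixes A B :: "'a::topological_ab_group_add set"
  assumes "sc2 A" "sc2 B"
  shows "sc2 ((\<lambda>(x,y). x + y) ` (A \<times> B))"
proof -
  obtain \<A> where A: "countable \<A>" "\<forall>K\<in>\<A>. compact K" "A = \<Union>\<A>" using assms(1) unfolding sc2_def by blast
  obtain \<B> where B: "countable \<B>" "\<forall>K\<in>\<B>. compact K" "B = \<Union>\<B>" using assms(2) unfolding sc2_def by blast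
  show ?thesis
    unfolding A(3) B(3) sum_set_UN
    by (rule sc2_Union) (use A B in \<open>auto intro!: sc2_compact compact_sum_set\<close>)
qed

lemma sc2_uminus:
  fixes A :: "'a::topological_ab_group_add set"
  assumes "sc2 A" shows "sc2 (uminus ` A)"
proof -
  obtain \<A> where A: "countable \<A>" "\<forall>K\<in>\<A>. compact K" "A = \<Union>\<A>" using assms(1) unfolding sc2_def by blast
  have "uminus ` A = (\<Union>K\<in>\<A>. uminus ` K)" using A(3) by auto
  moreover have "compact (uminus ` K)" if "K \<in> \<A>" for K
    using A(2) that by (intro compact_continuous_image continuous_intros) auto
  then have "sc2 (\<Union>K\<in>\<A>. uminus ` K)" by (intro sc2_Union[OF A(1)] sc2_compact)
  ultimately show ?thesis by simp
qed

primrec iter :: "'a::ab_group_add set \<Rightarrow> nat \<Rightarrow> 'a set" where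
  "iter E 0 = {0}"
| "iter E (Suc n) = (\<lambda>(x,y). x + y) ` (iter E n \<times> (E \<union> uminus ` E))"

definition gen :: "'a::ab_group_add set \<Rightarrow> 'a set" where
  "gen E = (\<Union>n. iter E n)"

lemma iter_add: "x \<in> iter E m \<Longrightarrow> y \<in> iter E n \<Longrightarrow> x + y \<in> iter E (m + n)"
proof (induction n arbitrary: y)
  case 0 then show ?case by simp
next
  case (Suc n)
  then obtain y' e where "y = y' + e" "y' \<in> iter E n" "e \<in> E \<union> uminus ` E" by auto
  then have "x + y = (x + y') + e" "x + y' \<in> iter E (m + n)" using Suc by (auto simp: add.assoc)
  then show ?case using \<open>e \<in> E \<union> uminus ` E\<close> 
    by (simp only: add_Suc_right iter.simps) (rule image_eqI[where x="(x+y',e)"], auto)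
qed

lemma iter_minus: "x \<in> iter E n \<Longrightarrow> - x \<in> iter E n"
proof (induction n arbitrary: x)
  case 0 then show ?case by simp
next
  case (Suc n)
  then obtain x' e where "x = x' + e" "x' \<in> iter E n" "e \<in> E \<union> uminus ` E" by auto
  then have "- x = (- x') + (- e)" "- x' \<in> iter E n" "- e \<in> E \<union> uminus ` E"
    using Suc by (auto simp: add.commute)
  then show ?case by (simp only: iter.simps) (rule image_eqI[where x="(-x',-e)"], auto)
qed

lemma gen_subgroup: "subgroup_set (gen E)"
  unfolding subgroup_set_def gen_def
proof (intro conjI ballI)
  show "0 \<in> (\<Union>n. iter E n)" by (auto intro: exI[of _ 0])
next
  fix x y assume "x \<in> (\<Union>n. iter E n)" "y \<in> (\<Union>n. iter E n)"
  then show "x + y \<in> (\<Union>n. iter E n)" using iter_add by blast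
next
  fix x assume "x \<in> (\<Union>n. iter E n)"
  then show "- x \<in> (\<Union>n. iter E n)" using iter_minus by blast
qed

lemma gen_sup: "E \<subseteq> gen E"
proof
  fix e assume "e \<in> E"
  then have "e \<in> iter E (Suc 0)" by (simp only: iter.simps) (rule image_eqI[where x="(0,e)"], auto)
  then show "e \<in> gen E" unfolding gen_def by blast
qed

lemma gen_sc2:
  fixes E :: "'a::topological_ab_group_add set"
  assumes "sc2 E" shows "sc2 (gen E)"
proof -
  have "sc2 (iter E n)" for n
  proof (induction n)
    case 0 then show ?case by (simp add: sc2_compact)
  next
    case (Suc n) then show ?case using assms by (simp add: sc2_sum sc2_Un sc2_uminus)
  qed
  then show ?thesis unfolding gen_def using sc2_Union[of UNIV "iter E"] by simp
qed



lemma haarD: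
  fixes M :: "'a::{topological_ab_group_add,t2_space} measure"
  assumes "haar_measure M"
  shows "sets M = sets borel"
    and "\<forall>A\<in>sets M. \<forall>x. emeasure M ((\<lambda>y. x + y) ` A) = emeasure M A"
    and "\<forall>K. compact K \<longrightarrow> emeasure M K < \<infinity>"
    and "\<forall>A\<in>sets M. emeasure M A = (INF U\<in>{U. open U \<and> A \<subseteq> U}. emeasure M U)"
    and "\<forall>U. open U \<longrightarrow> emeasure M U = (SUP K\<in>{K. compact K \<and> K \<subseteq> U}. emeasure M K)"
    and "emeasure M UNIV \<noteq> 0"
  using assms unfolding haar_measure_def by - (elim conjE, assumption)+

lemma haar_open_sets:
  fixes M :: "'a::{topological_ab_group_add,t2_space} measure"
  assumes "haar_measure M" "open D" shows "D \<in> sets M"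
proof -
  show ?thesis using haarD(1)[OF assms(1)] borel_open[OF assms(2)] by simp
qed

lemma haar_transl:
  fixes M :: "'a::{topological_ab_group_add,t2_space} measure"
  assumes "haar_measure M" "A \<in> sets M" shows "emeasure M ((\<lambda>y. x + y) ` A) = emeasure M A"
  using haarD(2)[OF assms(1)] assms(2) by blast

lemma haar_space:
  fixes M :: "'a::{topological_ab_group_add,t2_space} measure"
  assumes "haar_measure M" shows "space M = UNIV"
proof -
  show ?thesis using sets_eq_imp_space_eq[OF haarD(1)[OF assms(1)]] by simp
qed

lemma haar_pos:
  fixes M :: "'a::{topological_ab_group_add,t2_space} measure"
  assumes H: "haar_measure M" and D: "open D" "d \<in> D"
  shows "emeasure M D \<noteq> 0"
proof
  assume D0: "emeasure M D = 0"
  define T where "T x = (\<lambda>y. (x - d) + y) ` D" for x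
  have Tm: "emeasure M (T x) = 0" for x
    unfolding T_def using haar_transl[OF H haar_open_sets[OF H D(1)]] D0 by simp
  have To: "open (T x)" for x unfolding T_def by (rule open_transl[OF D(1)])
  have K0: "emeasure M K = 0" if cK: "compact K" for K
  proof -
    have cov: "K \<subseteq> \<Union>(T ` K)"
    proof
      fix x assume "x \<in> K"
      moreover have "x \<in> T x" unfolding T_def by (rule image_eqI[of _ _ d]) (simp_all add: D(2))
      ultimately show "x \<in> \<Union>(T ` K)" by blast
    qed
    then obtain F where F: "F \<subseteq> K" "finite F" "K \<subseteq> \<Union>(T ` F)"
      using compactE_image[OF cK _ cov] To by metis
    have "emeasure M K \<le> emeasure M (\<Union>(T ` F))"
      by (rule emeasure_mono[OF F(3)]) (intro sets.finite_UN F(2) ballI haar_open_sets[OF H To])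
    also have "\<dots> \<le> (\<Sum>x\<in>F. emeasure M (T x))"
      by (rule emeasure_subadditive_finite[OF F(2)]) (intro image_subsetI haar_open_sets[OF H To])
    also have "\<dots> = 0" using Tm by simp
    finally show ?thesis by simp
  qed
  have "emeasure M UNIV = (SUP K\<in>{K. compact K \<and> K \<subseteq> UNIV}. emeasure M K)"
    using haarD(5)[OF H, rule_format, OF open_UNIV] .
  also have "\<dots> = 0" by (rule SUP_eq_const) (use K0 in \<open>auto intro: exI[of _ "{}"]\<close>)
  finally show False using haarD(6)[OF H] by simp
qed


lemma haar_approx:
  fixes M :: "'a::{topological_ab_group_add,t2_space} measure"
  assumes H: "haar_measure M" and U: "open U" "emeasure M U < \<infinity>" and e: "e > 0"
  shows "\<exists>K. compact K \<and> K \<subseteq> U \<and> measure M U \<le> measure M K + e"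
proof (rule ccontr)
  assume neg: "\<not> ?thesis"
  then have lt: "measure M K + e < measure M U" if "compact K" "K \<subseteq> U" for K
  proof -
    have "\<not> (measure M U \<le> measure M K + e)" using neg that by blast
    then show ?thesis by linarith
  qed
  have fin: "emeasure M K < \<infinity>" if "K \<subseteq> U" "compact K" for K
    using emeasure_mono[OF that(1) haar_open_sets[OF H U(1)]] U(2) by simp
  have "emeasure M K \<le> ennreal (measure M U - e)" if "compact K \<and> K \<subseteq> U" for K
  proof -
    have "emeasure M K = ennreal (measure M K)"
      using fin[of K] that by (intro emeasure_eq_ennreal_measure) auto
    then show ?thesis using lt[of K] that by (simp add: ennreal_leI)
  qed
  then have "(SUP K\<in>{K. compact K \<and> K \<subseteq> U}. emeasure M K) \<le> ennreal (measure M U - e)"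
    by (intro SUP_least) auto
  moreover have "emeasure M U = (SUP K\<in>{K. compact K \<and> K \<subseteq> U}. emeasure M K)"
    using haarD(5)[OF H, rule_format, OF U(1)] .
  ultimately have "emeasure M U \<le> ennreal (measure M U - e)" by simp
  moreover have "emeasure M U = ennreal (measure M U)"
    using U(2) by (intro emeasure_eq_ennreal_measure) auto
  ultimately have "ennreal (measure M U) \<le> ennreal (measure M U - e)" by simp
  moreover have "0 + e < measure M U" using lt[of "{}"] by simp
  ultimately show False using e by (subst (asm) ennreal_le_iff) auto
qed



lemma haar_compact_sets:
  fixes M :: "'a::{topological_ab_group_add,t2_space} measure"
  assumes "haar_measure M" "compact K" shows "K \<in> sets M"
  using haarD(1)[OF assms(1)] borel_closed[OF compact_imp_closed[OF assms(2)]] by simp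

lemma exists_subgroup:
  fixes M :: "'a::{topological_ab_group_add,t2_space} measure"
  assumes lca: "lca_group TYPE('a)" and H: "haar_measure M"
    and U: "open U" "emeasure M U < \<infinity>"
  shows "\<exists>G. open G \<and> subgroup_set G \<and> sigma_compact G \<and> U \<subseteq> G"
proof -
  have "locally_compact_space (euclidean :: 'a topology)"
    using lca unfolding lca_group_def .
  then obtain V K0 where VK: "open V" "compact K0" "(0::'a) \<in> V" "V \<subseteq> K0"
    unfolding locally_compact_space_def by (auto; metis)
  have "\<forall>n. \<exists>K. compact K \<and> K \<subseteq> U \<and> measure M U \<le> measure M K + inverse (real (Suc n))"
    using haar_approx[OF H U] by auto
  then obtain K where K: "\<And>n. compact (K n)" "\<And>n. K n \<subseteq> U"
    "\<And>n. measure M U \<le> measure M (K n) + inverse (real (Suc n))"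
    by metis
  define E where "E = K0 \<union> (\<Union>n. K n)"
  define G where "G = gen E"
  have "sc2 E" unfolding E_def
    by (intro sc2_Un sc2_compact VK sc2_Union) (auto intro: sc2_compact K)
  then have sc: "sigma_compact G" unfolding G_def by (intro sc2_sigma_compact gen_sc2)
  have sg: "subgroup_set G" unfolding G_def by (rule gen_subgroup)
  have EG: "E \<subseteq> G" unfolding G_def by (rule gen_sup)
  have op: "open G"
    by (rule subgroup_open[OF sg VK(1,3)]) (use VK(4) EG in \<open>auto simp: E_def\<close>)
  have "U \<subseteq> G"
  proof
    fix x assume xU: "x \<in> U"
    show "x \<in> G"
    proof (rule ccontr)
      assume xG: "x \<notin> G"
      define D where "D = U \<inter> (\<lambda>y. x + y) ` G"
      have Do: "open D" unfolding D_def by (intro open_Int U(1) open_transl op)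
      have xD: "x \<in> D" unfolding D_def using xU sg
        by (auto simp: subgroup_set_def intro!: image_eqI[of _ _ 0])
      have D0: "emeasure M D \<noteq> 0" by (rule haar_pos[OF H Do xD])
      have Dsets: "D \<in> sets M" by (rule haar_open_sets[OF H Do])
      have Usets: "U \<in> sets M" by (rule haar_open_sets[OF H U(1)])
      have DU: "D \<subseteq> U" unfolding D_def by auto
      have Dfin: "emeasure M D \<noteq> \<infinity>"
        using emeasure_mono[OF DU Usets] U(2) by auto
      have Kfin: "emeasure M (K n) \<noteq> \<infinity>" for n
        using emeasure_mono[OF K(2) Usets, of n] U(2) by auto
      have disj: "K n \<inter> D = {}" for n
      proof -
        have "K n \<subseteq> G" using EG unfolding E_def by auto
        moreover have "D \<inter> G = {}"
        proof (rule ccontr)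
          assume "D \<inter> G \<noteq> {}"
          then obtain g where "g \<in> G" "x + g \<in> G" unfolding D_def by auto
          then have "(x + g) - g \<in> G" by (rule subgroup_diff[OF sg, rotated])
          then show False using xG by simp
        qed
        ultimately show ?thesis by blast
      qed
      have le: "measure M D \<le> inverse (real (Suc n))" for n
      proof -
        have "measure M (K n \<union> D) = measure M (K n) + measure M D"
          by (rule measure_Union[OF Kfin Dfin haar_compact_sets[OF H K(1)] Dsets disj])
        moreover have "measure M (K n \<union> D) \<le> measure M U"
          by (rule measure_mono_fmeasurable)
            (use K(2) DU haar_compact_sets[OF H K(1)] Dsets Usets U(2) in \<open>auto simp: fmeasurable_def\<close>)
        ultimately show ?thesis using K(3)[of n] by linarith
      qed
      have "measure M D \<le> 0"
      proof (rule ccontr)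
        assume "\<not> measure M D \<le> 0"
        then obtain n where "n > 0" "inverse (real n) < measure M D"
          using ex_inverse_of_nat_less[of "measure M D"] by auto
        then obtain m where "n = Suc m" by (cases n) auto
        then show False using le[of m] \<open>inverse (real n) < measure M D\<close> by simp
      qed
      then have "measure M D = 0" using measure_nonneg[of M D] by linarith
      then have "emeasure M D = 0"
        using Dfin by (simp add: emeasure_eq_ennreal_measure)
      then show False using D0 by simp
    qed
  qed
  then show ?thesis using op sg sc by blast
qed



lemma pdD:
  fixes f :: "'a::ab_group_add \<Rightarrow> real" and c :: "nat \<Rightarrow> complex" and g :: "nat \<Rightarrow> 'a" and n :: nat
  assumes "pos_def_on H f" "\<forall>i<n. g i \<in> H"
  shows "Im (\<Sum>i<n. \<Sum>j<n. c i * cnj (c j) * complex_of_real (f (g i - g j))) = 0 \<and>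
         0 \<le> Re (\<Sum>i<n. \<Sum>j<n. c i * cnj (c j) * complex_of_real (f (g i - g j)))"
  using assms(1)[unfolded pos_def_on_def Let_def, rule_format] assms(2) by blast

lemma pd_le1:
  fixes f :: "'a::ab_group_add \<Rightarrow> real"
  assumes pd: "pos_def_on H f" and "0 \<in> H" "x \<in> H" "f 0 = 1"
  shows "f x \<le> 1"
proof -
  define g :: "nat \<Rightarrow> 'a" where "g i = (if i = 0 then 0 else x)" for i
  have gH: "\<forall>i<2. g i \<in> H" using assms by (auto simp: g_def)
  have 1: "Im (\<Sum>i<2. \<Sum>j<2. (if i = 0 then 1 else \<i>) * cnj (if j = 0 then 1 else \<i>) * complex_of_real (f (g i - g j))) = 0"
    using pdD[OF pd gH, of "\<lambda>i. if i = 0 then 1 else \<i>"] by blast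
  have 2: "0 \<le> Re (\<Sum>i<2. \<Sum>j<2. (if i = 0 then 1 else -1) * cnj (if j = 0 then 1 else -1) * complex_of_real (f (g i - g j)))"
    using pdD[OF pd gH, of "\<lambda>i. if i = 0 then 1 else -1"] by blast
  from 1 have "f x = f (- x)" by (simp add: numeral_2_eq_2 g_def)
  moreover from 2 have "0 \<le> 2 - f x - f (- x)" using assms(4) by (simp add: numeral_2_eq_2 g_def)
  ultimately show ?thesis by linarith
qed

lemma pd_ext:
  fixes f :: "'a::ab_group_add \<Rightarrow> real"
  assumes sg: "subgroup_set H" and pd: "pos_def_on H f"
  shows "pos_def_on UNIV (\<lambda>x. if x \<in> H then f x else 0)"
  unfolding pos_def_on_def Let_def
proof (intro allI impI)
  fix n :: nat and c :: "nat \<Rightarrow> complex" and g :: "nat \<Rightarrow> 'a"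
  have H0: "0 \<in> H" and Hadd: "\<And>x y. x \<in> H \<Longrightarrow> y \<in> H \<Longrightarrow> x + y \<in> H"
    and Hneg: "\<And>x. x \<in> H \<Longrightarrow> - x \<in> H"
    using sg unfolding subgroup_set_def by auto
  define r where "r i = (LEAST j. g j - g i \<in> H)" for i
  have rP: "g (r i) - g i \<in> H" for i
    unfolding r_def by (rule LeastI[of _ i]) (simp add: H0)
  have req: "r i = r j \<longleftrightarrow> g i - g j \<in> H" for i j
  proof
    assume rij: "r i = r j"
    have "(g (r j) - g j) - (g (r i) - g i) \<in> H"
      by (rule subgroup_diff[OF sg rP rP])
    then have "(g (r j) - g j) - (g (r j) - g i) \<in> H" using rij by simp
    then show "g i - g j \<in> H" by (simp add: algebra_simps)
  next
    assume ij: "g i - g j \<in> H"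
    have "(g k - g i \<in> H) = (g k - g j \<in> H)" for k
    proof
      assume "g k - g i \<in> H"
      from Hadd[OF this ij] show "g k - g j \<in> H" by (simp add: algebra_simps)
    next
      assume "g k - g j \<in> H"
      from subgroup_diff[OF sg this ij] show "g k - g i \<in> H" by (simp add: algebra_simps)
    qed
    then show "r i = r j" unfolding r_def by simp
  qed
  define R where "R = r ` {..<n}"
  define X where "X i j = c i * cnj (c j) * complex_of_real (f (g i - g j))" for i j
  define blk where "blk k = (\<Sum>i<n. \<Sum>j<n. (if r i = k then c i else 0) * cnj (if r j = k then c j else 0) *
      complex_of_real (f ((if r i = k then g i - g k else 0) - (if r j = k then g j - g k else 0))))" for k
  have blk_pos: "Im (blk k) = 0 \<and> 0 \<le> Re (blk k)" if "k \<in> R" for k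
  proof -
    have "\<forall>i<n. (if r i = k then g i - g k else 0) \<in> H"
    proof (intro allI impI)
      fix i show "(if r i = k then g i - g k else 0) \<in> H"
        using Hneg[OF rP[of i]] H0 by (auto simp: algebra_simps)
    qed
    from pdD[OF pd this] show ?thesis unfolding blk_def .
  qed
  have blk_eq: "blk k = (\<Sum>i<n. \<Sum>j<n. if r i = k \<and> r j = k then X i j else 0)" for k
    unfolding blk_def X_def by (intro sum.cong refl) auto
  have S_eq: "(\<Sum>i<n. \<Sum>j<n. c i * cnj (c j) * complex_of_real (if g i - g j \<in> H then f (g i - g j) else 0))
      = (\<Sum>k\<in>R. blk k)"
  proof -
    have "(\<Sum>k\<in>R. blk k) = (\<Sum>i<n. \<Sum>j<n. \<Sum>k\<in>R. if r i = k \<and> r j = k then X i j else 0)"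
      unfolding blk_eq by (subst sum.swap) (simp add: sum.swap[of _ R])
    also have "\<dots> = (\<Sum>i<n. \<Sum>j<n. if r i = r j then X i j else 0)"
    proof (intro sum.cong refl)
      fix i j assume "i \<in> {..<n}"
      then have "r i \<in> R" unfolding R_def by auto
      have "(\<Sum>k\<in>R. if r i = k \<and> r j = k then X i j else 0) = (\<Sum>k\<in>R. if r i = k then (if r j = r i then X i j else 0) else 0)"
        by (intro sum.cong refl) auto
      also have "\<dots> = (if r i = r j then X i j else 0)"
        using \<open>r i \<in> R\<close> by (simp add: R_def sum.delta eq_commute)
      finally show "(\<Sum>k\<in>R. if r i = k \<and> r j = k then X i j else 0) = (if r i = r j then X i j else 0)" .
    qed
    also have "\<dots> = (\<Sum>i<n. \<Sum>j<n. c i * cnj (c j) * complex_of_real (if g i - g j \<in> H then f (g i - g j) else 0))"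
      unfolding X_def req by (intro sum.cong refl) auto
    finally show ?thesis by simp
  qed
  show "Im (\<Sum>i<n. \<Sum>j<n. c i * cnj (c j) * complex_of_real (if g i - g j \<in> H then f (g i - g j) else 0)) = 0 \<and>
        0 \<le> Re (\<Sum>i<n. \<Sum>j<n. c i * cnj (c j) * complex_of_real (if g i - g j \<in> H then f (g i - g j) else 0))"
    unfolding S_eq Im_sum Re_sum using blk_pos by (auto intro: sum_nonneg)
qed



lemma GGD:
  assumes "f \<in> GG M S \<Omega>"
  shows "continuous_on S f" "pos_def_on S f" "f 0 = 1" "integrable (restrict_space M S) f"
    "supp_on S (pos_part f) \<subseteq> \<Omega>"
  using assms unfolding GG_def mem_Collect_eq by - (elim conjE, assumption)+

lemma GGI:
  assumes "continuous_on S f" "pos_def_on S f" "f 0 = 1" "integrable (restrict_space M S) f"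
    "supp_on S (pos_part f) \<subseteq> \<Omega>"
  shows "f \<in> GG M S \<Omega>"
  using assms unfolding GG_def mem_Collect_eq by (intro conjI)

lemma GG_le_indicator:
  fixes M :: "'a::{topological_ab_group_add,t2_space} measure"
  assumes f: "f \<in> GG M S \<Omega>" and sg: "subgroup_set S" and x: "x \<in> S"
  shows "f x \<le> indicator \<Omega> x"
proof (cases "f x > 0")
  case True
  have S0: "0 \<in> S" using sg unfolding subgroup_set_def by blast
  have f1: "f x \<le> 1" by (rule pd_le1[OF GGD(2)[OF f] S0 x GGD(3)[OF f]])
  have "x \<in> {g\<in>S. pos_part f g \<noteq> 0}" using x True by (auto simp: pos_part_def)
  then have "x \<in> supp_on S (pos_part f)" unfolding supp_on_def using x closure_subset[of "{g\<in>S. pos_part f g \<noteq> 0}"] by blast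
  then have "x \<in> \<Omega>" using GGD(5)[OF f] by blast
  then show ?thesis using f1 by simp
next
  case False
  then show ?thesis by (simp add: indicator_def)
qed

lemma integral_GG_bound:
  fixes M :: "'a::{topological_ab_group_add,t2_space} measure"
  assumes H: "haar_measure M" and f: "f \<in> GG M S \<Omega>" and sg: "subgroup_set S" and Ss: "S \<in> sets M"
    and \<Omega>s: "\<Omega> \<in> sets M" and \<Omega>f: "emeasure M \<Omega> < \<infinity>"
  shows "integral\<^sup>L (restrict_space M S) f \<le> measure M \<Omega>"
proof -
  have sp: "space M = UNIV" by (rule haar_space[OF H])
  have SS: "S \<inter> space M \<in> sets M" using Ss sp by simp
  have int: "integrable M (\<lambda>x. indicator S x * f x)"
    using GGD(4)[OF f] integrable_restrict_space[OF SS, of f] by simp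
  have "integral\<^sup>L (restrict_space M S) f = integral\<^sup>L M (\<lambda>x. indicator S x * f x)"
    using integral_restrict_space[OF SS, of f] by simp
  also have "\<dots> \<le> integral\<^sup>L M (indicator \<Omega>)"
  proof (rule integral_mono[OF int])
    show "integrable M (indicator \<Omega> :: 'a \<Rightarrow> real)" using \<Omega>s \<Omega>f by simp
    fix x show "indicator S x * f x \<le> (indicator \<Omega> x :: real)"
      using GG_le_indicator[OF f sg, of x] by (cases "x \<in> S") auto
  qed
  also have "\<dots> = measure M \<Omega>" using sp by simp
  finally show ?thesis .
qed

lemma DD_eq:
  fixes M :: "'a::{topological_ab_group_add,t2_space} measure"
  assumes H: "haar_measure M" and G: "open G" "subgroup_set G" and \<Omega>G: "\<Omega> \<subseteq> G"
    and \<Omega>s: "\<Omega> \<in> sets M" and \<Omega>f: "emeasure M \<Omega> < \<infinity>"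
  shows "DD M UNIV \<Omega> = DD M G \<Omega>"
proof -
  have sp: "space M = UNIV" by (rule haar_space[OF H])
  have Gs: "G \<in> sets M" by (rule haar_open_sets[OF H G(1)])
  have GS: "G \<inter> space M \<in> sets M" using Gs sp by simp
  have US: "UNIV \<inter> space M \<in> sets M" using sets.top[of M] by simp
  have Gc: "closed G" by (rule subgroup_open_closed[OF G(2,1)])
  have sgU: "subgroup_set (UNIV :: 'a set)" by (simp add: subgroup_set_def)
  have G0: "0 \<in> G" using G(2) unfolding subgroup_set_def by blast
  have intU: "integral\<^sup>L (restrict_space M UNIV) f = integral\<^sup>L M f" for f :: "'a \<Rightarrow> real"
    using integral_restrict_space[OF US, of f] by simp
  have iblU: "integrable (restrict_space M UNIV) f = integrable M f" for f :: "'a \<Rightarrow> real"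
    using integrable_restrict_space[OF US, of f] by simp
  have intG: "integral\<^sup>L (restrict_space M G) f = integral\<^sup>L M (\<lambda>x. indicator G x * f x)" for f :: "'a \<Rightarrow> real"
    using integral_restrict_space[OF GS, of f] by simp
  have iblG: "integrable (restrict_space M G) f = integrable M (\<lambda>x. indicator G x * f x)" for f :: "'a \<Rightarrow> real"
    using integrable_restrict_space[OF GS, of f] by simp
  have ext: "(\<lambda>x. if x \<in> G then g x else 0) \<in> GG M UNIV \<Omega> \<and>
      integral\<^sup>L (restrict_space M UNIV) (\<lambda>x. if x \<in> G then g x else 0) = integral\<^sup>L (restrict_space M G) g"
    if g: "g \<in> GG M G \<Omega>" for g
  proof -
    define f0 where "f0 = (\<lambda>x. if x \<in> G then g x else 0)"
    have eq: "f0 = (\<lambda>x. indicator G x * g x)" unfolding f0_def by (auto simp: indicator_def)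
    have "continuous_on (G \<union> - G) f0"
    proof (rule continuous_on_open_Un)
      show "continuous_on G f0" using GGD(1)[OF g] unfolding f0_def
        by (subst continuous_on_cong[OF refl, of _ _ g]) auto
      show "continuous_on (- G) f0" unfolding f0_def
        by (subst continuous_on_cong[OF refl, of _ _ "\<lambda>_. 0"]) (auto intro: continuous_on_const)
      show "open G" by (rule G(1))
      show "open (- G)" using Gc by (simp add: open_Compl)
    qed
    then have c: "continuous_on UNIV f0" by simp
    have pd: "pos_def_on UNIV f0" unfolding f0_def by (intro pd_ext G(2) GGD(2)[OF g])
    have f00: "f0 0 = 1" using GGD(3)[OF g] G0 unfolding f0_def by simp
    have ibl: "integrable (restrict_space M UNIV) f0" using GGD(4)[OF g] unfolding iblU eq iblG by simp
    have "{x\<in>UNIV. pos_part f0 x \<noteq> 0} = {x\<in>G. pos_part g x \<noteq> 0}"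
      unfolding f0_def pos_part_def by auto
    moreover have "closure {x\<in>G. pos_part g x \<noteq> 0} \<subseteq> G"
      by (rule closure_minimal[OF _ Gc]) auto
    ultimately have "supp_on UNIV (pos_part f0) = supp_on G (pos_part g)"
      unfolding supp_on_def by auto
    then have supp: "supp_on UNIV (pos_part f0) \<subseteq> \<Omega>" using GGD(5)[OF g] by simp
    have "f0 \<in> GG M UNIV \<Omega>" by (rule GGI[OF c pd f00 ibl supp])
    moreover have "integral\<^sup>L (restrict_space M UNIV) f0 = integral\<^sup>L (restrict_space M G) g"
      unfolding intU intG eq ..
    ultimately show ?thesis unfolding f0_def by (rule conjI)
  qed
  have res: "f \<in> GG M G \<Omega> \<and> integral\<^sup>L (restrict_space M UNIV) f \<le> integral\<^sup>L (restrict_space M G) f"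
    if f: "f \<in> GG M UNIV \<Omega>" for f
  proof -
    have ibl: "integrable M f" using GGD(4)[OF f] unfolding iblU .
    have c: "continuous_on G f" using GGD(1)[OF f] by (rule continuous_on_subset) simp
    have pd: "pos_def_on G f" using GGD(2)[OF f] unfolding pos_def_on_def by simp
    have "supp_on G (pos_part f) \<subseteq> supp_on UNIV (pos_part f)"
      unfolding supp_on_def by (auto intro: closure_mono[THEN subsetD, rotated])
    then have supp: "supp_on G (pos_part f) \<subseteq> \<Omega>" using GGD(5)[OF f] by (rule order_trans)
    have iblG': "integrable (restrict_space M G) f" unfolding iblG
      using integrable_mult_indicator[OF Gs ibl] by simp
    have "f \<in> GG M G \<Omega>" by (rule GGI[OF c pd GGD(3)[OF f] iblG' supp])
    moreover have "integral\<^sup>L M f \<le> integral\<^sup>L M (\<lambda>x. indicator G x * f x)"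
    proof (rule integral_mono[OF ibl])
      show "integrable M (\<lambda>x. indicator G x * f x)" using integrable_mult_indicator[OF Gs ibl] by simp
      fix x show "f x \<le> indicator G x * f x"
      proof (cases "x \<in> G")
        case False
        then have "x \<notin> \<Omega>" using \<Omega>G by blast
        then have "f x \<le> 0" using GG_le_indicator[OF f sgU, of x] by simp
        then show ?thesis using False by simp
      qed simp
    qed
    ultimately show ?thesis unfolding intU intG by (rule conjI)
  qed
  have bddU: "bdd_above ((\<lambda>f. integral\<^sup>L (restrict_space M UNIV) f) ` GG M UNIV \<Omega>)"
    by (rule bdd_aboveI[of _ "measure M \<Omega>"])
       (use integral_GG_bound[OF H _ sgU sets.top[of M, unfolded sp] \<Omega>s \<Omega>f] in auto)
  have bddG: "bdd_above ((\<lambda>f. integral\<^sup>L (restrict_space M G) f) ` GG M G \<Omega>)"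
    by (rule bdd_aboveI[of _ "measure M \<Omega>"])
       (use integral_GG_bound[OF H _ G(2) Gs \<Omega>s \<Omega>f] in auto)
  have emp: "GG M UNIV \<Omega> = {} \<longleftrightarrow> GG M G \<Omega> = {}"
  proof
    assume "GG M UNIV \<Omega> = {}"
    then show "GG M G \<Omega> = {}" using ext by (metis empty_iff equals0I)
  next
    assume "GG M G \<Omega> = {}"
    then show "GG M UNIV \<Omega> = {}" using res by (metis empty_iff equals0I)
  qed
  show ?thesis
  proof (cases "GG M G \<Omega> = {}")
    case True
    then show ?thesis using emp unfolding DD_def by simp
  next
    case False
    then have F2: "GG M UNIV \<Omega> \<noteq> {}" using emp by blast
    have "(SUP f\<in>GG M UNIV \<Omega>. integral\<^sup>L (restrict_space M UNIV) f) \<le> (SUP f\<in>GG M G \<Omega>. integral\<^sup>L (restrict_space M G) f)"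
    proof (rule cSUP_mono[OF F2 bddG])
      fix f assume "f \<in> GG M UNIV \<Omega>"
      from res[OF this] show "\<exists>m\<in>GG M G \<Omega>. integral\<^sup>L (restrict_space M UNIV) f \<le> integral\<^sup>L (restrict_space M G) m"
        by (intro bexI[of _ f]) simp_all
    qed
    moreover have "(SUP f\<in>GG M G \<Omega>. integral\<^sup>L (restrict_space M G) f) \<le> (SUP f\<in>GG M UNIV \<Omega>. integral\<^sup>L (restrict_space M UNIV) f)"
    proof (rule cSUP_mono[OF False bddU])
      fix g assume "g \<in> GG M G \<Omega>"
      from ext[OF this] show "\<exists>m\<in>GG M UNIV \<Omega>. integral\<^sup>L (restrict_space M G) g \<le> integral\<^sup>L (restrict_space M UNIV) m"
        by (intro bexI[of _ "\<lambda>x. if x \<in> G then g x else 0"]) simp_all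
    qed
    ultimately show ?thesis using False F2 unfolding DD_def by simp
  qed
qed

theorem theorem3:
  fixes M :: "'a::{topological_ab_group_add,t2_space} measure"
    and \<Omega> :: "'a set"
  assumes "lca_group TYPE('a)"
    and "haar_measure M"
    and "\<Omega> \<in> sets M"
    and "emeasure M \<Omega> < \<infinity>"
  shows "\<exists>H. open H \<and> subgroup_set H \<and> sigma_compact H \<and> \<Omega> \<subseteq> H \<and>
             DD M UNIV \<Omega> = DD M H \<Omega>"
proof -
  have "emeasure M \<Omega> = (INF U\<in>{U. open U \<and> \<Omega> \<subseteq> U}. emeasure M U)"
    using haarD(4)[OF assms(2)] assms(3) by (rule bspec)
  then have "(INF U\<in>{U. open U \<and> \<Omega> \<subseteq> U}. emeasure M U) < \<infinity>" using assms(4) by simp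
  then obtain U where U: "open U" "\<Omega> \<subseteq> U" "emeasure M U < \<infinity>"
    by (auto simp: INF_less_iff)
  obtain G where G: "open G" "subgroup_set G" "sigma_compact G" "U \<subseteq> G"
    using exists_subgroup[OF assms(1,2) U(1,3)] by blast
  have "DD M UNIV \<Omega> = DD M G \<Omega>"
    by (rule DD_eq[OF assms(2) G(1,2) _ assms(3,4)]) (use U(2) G(4) in blast)
  then show ?thesis using G U(2) by blast
qed


end
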